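(* For any $C_0>0$, $T>0$ there exist a constant $C(K,C_0)$ and $\bar N=\bar N(T,C_0,L)$ such that the following holds. Let $\rho_{0,L}\in L^1(\mathbb T_L)$ (nonnegative, $c_L=\int_{\mathbb T_L}\rho_{0,L}\le1$) with $\mathcal F_L(\rho_{0,L})\le C_0$, and assume the deterministic particle approximations $\{\rho^N_L\}_{N\ge\bar N}$ starting from $\rho_{0,L}$ are well defined on $[0,T)$. Then $$\sup_{N\ge\bar N}\int_0^T\sum_{k=0}^{N-1}N\,|\phi(\rho_k(t))-\phi(\rho_{k-1}(t))|^2\,dt\le C(K,C_0)(1+T).$$
   Context: Standing assumptions: $K:\mathbb R\to\mathbb R$ satisfies $K(z)=K(|z|)$, $K\in C^0(\mathbb R)\cap C^2(\mathbb R\setminus\{0\})$, $K,K'\in L^\infty(\mathbb R)$, $K''\in L^\infty(\mathbb R\setminus\{0\})$, $\|K'\|_{L^1(\mathbb R)}<\infty$. $W:[0,\infty)\to[0,\infty)$ and $\phi(\rho):=\rho W'(\rho)-W(\rho)$ is $C^1$ with $\phi(0)=0$, $\phi$ strictly increasing, $\phi'(\rho)\rho\le c_0\phi(\rho)$, $\phi(\rho)\le\max\{\rho,c_0W(\rho)\}$ for some $c_0>0$, and there are $c_1,c_2>0$, $\hat\rho<1<\bar\rho$ with $\phi(\rho)\le c_1\rho$ for $\rho\le\hat\rho$ and $\phi(\rho)\ge c_2\rho$ for $\rho\ge\bar\rho$. $\mathbb T_L=\mathbb R/L\mathbb Z\cong[-L/2,L/2)$; $\mathcal F_L(\rho):=\frac12\int_{\mathbb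 T_L}\int_{\mathbb T_L}K(x-y)\rho(x)\rho(y)\,dx\,dy+\int_{\mathbb T_L}W(\rho)\,dx$. Deterministic particle approximation: set $x_0=-L/2$, $x_k=\sup\{x:\int_{x_{k-1}}^x\rho_{0,L}<c_L/N\}$, $k=1,\dots,N$; particles $x_k(t)$ (indices mod $N$) solve $\dot x_k=-\frac{c_L}{N}\sum_{j\ne k}K'(x_k-x_j)-\frac{N}{c_L}[\phi(\rho_k)-\phi(\rho_{k-1})]$, $x_k(0)=x_k$, with $\rho_k(t)=\frac{c_L}{N(x_{k+1}(t)-x_k(t))}$, and $\rho^N_L(t,x)=\sum_{k=0}^{N-1}\rho_k(t)\chi_{[x_k(t),x_{k+1}(t))}(x)$; well-defined on an interval if $x_0(t)<\dots<x_{N-1}(t)$ there. *)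

theory Defs
  imports "HOL-Analysis.Analysis"
begin

text \<open>Torus T_L = R / L Z, identified with the fundamental domain [-L/2, L/2).\<close>
definition torus_dom :: "real \<Rightarrow> real set" where
  "torus_dom L = {-L/2..<L/2}"

text \<open>Representative in [-L/2, L/2) of a difference z taken modulo L.\<close>
definition tred :: "real \<Rightarrow> real \<Rightarrow> real" where
  "tred L z = z - L * of_int \<lfloor>(z + L/2) / L\<rfloor>"

definition phi :: "(real \<Rightarrow> real) \<Rightarrow> (real \<Rightarrow> real) \<Rightarrow> real \<Rightarrow> real" where
  "phi W W' r = r * W' r - W r"

definition cmass :: "real \<Rightarrow> (real \<Rightarrow> real) \<Rightarrow> real" where
  "cmass L \<rho>0 = (LINT x:torus_dom L|lborel. \<rho>0 x)"

definition FL :: "(real \<Rightarrow> real) \<Rightarrow> (real \<Rightarrow> real) \<Rightarrow> real \<Rightarrow> (real \<Rightarrow> real) \<Rightarrow> real" where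
  "FL K W L \<rho> =
     1/2 * (LINT x:torus_dom L|lborel. (LINT y:torus_dom L|lborel. K (tred L (x - y)) * \<rho> x * \<rho> y))
     + (LINT x:torus_dom L|lborel. W (\<rho> x))"

fun init_pos :: "real \<Rightarrow> (real \<Rightarrow> real) \<Rightarrow> nat \<Rightarrow> nat \<Rightarrow> real" where
  "init_pos L \<rho>0 N 0 = - L / 2"
| "init_pos L \<rho>0 N (Suc k) =
     Sup {x. (LBINT y=init_pos L \<rho>0 N k..x. indicator (torus_dom L) y * \<rho>0 y) < cmass L \<rho>0 / real N}"

text \<open>Next particle with periodic convention x_N = x_0 + L.\<close>
definition nxt :: "real \<Rightarrow> nat \<Rightarrow> (nat \<Rightarrow> real) \<Rightarrow> nat \<Rightarrow> real" where
  "nxt L N x k = (if Suc k < N then x (Suc k) else x 0 + L)"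

definition prho :: "real \<Rightarrow> real \<Rightarrow> nat \<Rightarrow> (nat \<Rightarrow> real) \<Rightarrow> nat \<Rightarrow> real" where
  "prho L c N x k = c / (real N * (nxt L N x k - x k))"

text \<open>rho_(k-1), indices mod N (so rho_(-1) = rho_(N-1)).\<close>
definition prho_prev :: "real \<Rightarrow> real \<Rightarrow> nat \<Rightarrow> (nat \<Rightarrow> real) \<Rightarrow> nat \<Rightarrow> real" where
  "prho_prev L c N x k = prho L c N x (if k = 0 then N - 1 else k - 1)"

definition particle_solution ::
  "(real \<Rightarrow> real) \<Rightarrow> (real \<Rightarrow> real) \<Rightarrow> real \<Rightarrow> (real \<Rightarrow> real) \<Rightarrow> nat \<Rightarrow> real
    \<Rightarrow> (nat \<Rightarrow> real \<Rightarrow> real) \<Rightarrow> bool" where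
  "particle_solution K' \<phi> L \<rho>0 N T x \<longleftrightarrow>
     (let c = cmass L \<rho>0 in
      (\<forall>k<N. x k 0 = init_pos L \<rho>0 N k) \<and>
      (\<forall>t\<in>{0..<T}. (\<forall>k. Suc k < N \<longrightarrow> x k t < x (Suc k) t) \<and> x (N - 1) t < x 0 t + L) \<and>
      (\<forall>k<N. \<forall>t\<in>{0..<T}.
         ((\<lambda>s. x k s) has_real_derivative
            (- (c / real N) * (\<Sum>j\<in>{..<N} - {k}. K' (tred L (x k t - x j t)))
             - (real N / c) * (\<phi> (prho L c N (\<lambda>i. x i t) k) - \<phi> (prho_prev L c N (\<lambda>i. x i t) k))))
         (at t within {0..<T})))"

end

theory Submission
  imports Defs
begin


lemma supp_line:
  fixes W W' :: "real \<Rightarrow> real"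
  assumes W_deriv: "\<forall>r\<ge>0. (W has_real_derivative W' r) (at r within {0..})"
    and phi_0: "phi W W' 0 = 0" and mono: "strict_mono_on {0..} (phi W W')"
    and Wnn: "\<forall>r\<ge>0. W r \<ge> 0"
    and m: "m > 0" and y: "y \<ge> 0"
  shows "W y \<ge> W m + W' m * (y - m)"
proof -
  have Wat: "(W has_real_derivative W' r) (at r)" if "r > 0" for r
  proof -
    have "at r within {0..} = at r"
      by (rule at_within_interior) (use that in auto)
    moreover have "(W has_real_derivative W' r) (at r within {0..})" using W_deriv that by simp
    ultimately show ?thesis by simp
  qed
  define u where "u z = (W z - W m - W' m * (z - m)) / z" for z
  have uder: "(u has_real_derivative (phi W W' z - phi W W' m) / z^2) (at z)" if "z > 0" for z
  proof -
    have "(u has_real_derivative ((W' z - W' m) * z - (W z - W m - W' m * (z - m)) * 1) / (z*z)) (at z)"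
      unfolding u_def
      by (rule derivative_eq_intros Wat that refl | use that in simp)+
    moreover have "((W' z - W' m) * z - (W z - W m - W' m * (z - m)) * 1) / (z*z) = (phi W W' z - phi W W' m) / z^2"
      by (simp add: phi_def power2_eq_square algebra_simps)
    ultimately show ?thesis by simp
  qed
  show ?thesis
  proof (cases "y = 0")
    case True
    have "phi W W' m > phi W W' 0" using mono m by (auto simp: strict_mono_on_def)
    then show ?thesis using True Wnn phi_0 by (auto simp: phi_def algebra_simps)
  next
    case False
    hence ypos: "y > 0" using y by simp
    have "u y \<ge> 0"
    proof (cases "y < m")
      case True
      obtain z where z: "y < z" "z < m" "u m - u y = (m - y) * ((phi W W' z - phi W W' m) / z^2)"
        using MVT2[of y m u "\<lambda>z. (phi W W' z - phi W W' m) / z^2"] True ypos uder by force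
      have "phi W W' z < phi W W' m" using mono z ypos by (auto simp: strict_mono_on_def)
      hence "(m - y) * ((phi W W' z - phi W W' m) / z^2) \<le> 0" using True
        by (intro mult_nonneg_nonpos divide_nonpos_nonneg) auto
      moreover have "u m = 0" by (simp add: u_def)
      ultimately show ?thesis using z by simp
    next
      case False
      show ?thesis
      proof (cases "y = m")
        case True then show ?thesis by (simp add: u_def)
      next
        case False
        hence ym: "m < y" using \<open>\<not> y < m\<close> by simp
        obtain z where z: "m < z" "z < y" "u y - u m = (y - m) * ((phi W W' z - phi W W' m) / z^2)"
          using MVT2[of m y u "\<lambda>z. (phi W W' z - phi W W' m) / z^2"] ym m uder by force
        have "phi W W' z > phi W W' m" using mono z m by (auto simp: strict_mono_on_def)
        hence "(y - m) * ((phi W W' z - phi W W' m) / z^2) \<ge> 0" using ym by simp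
        moreover have "u m = 0" by (simp add: u_def)
        ultimately show ?thesis using z by simp
      qed
    qed
    hence "W y - W m - W' m * (y - m) \<ge> 0" using ypos by (simp add: u_def divide_nonneg_pos zero_le_divide_iff)
    then show ?thesis by simp
  qed
qed



lemma iv_int:
  fixes f :: "real \<Rightarrow> real"
  assumes "integrable lborel f"
  shows "interval_lebesgue_integrable lborel a b f"
  unfolding interval_lebesgue_integrable_def set_integrable_def
  using integrable_mult_indicator[OF _ assms] by simp

lemma set_int_of_int:
  fixes f :: "real \<Rightarrow> real"
  assumes "integrable lborel f" "A \<in> sets borel"
  shows "set_integrable lborel A f"
  unfolding set_integrable_def
  using integrable_mult_indicator[of A lborel f] assms by simp

lemma iv_sum:
  fixes f :: "real \<Rightarrow> real" and a b c :: real
  assumes "integrable lborel f"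
  shows "(LBINT x=a..b. f x) + (LBINT x=b..c. f x) = (LBINT x=a..c. f x)"
  by (rule interval_integral_sum) (rule iv_int[OF assms])

lemma iv_henstock:
  fixes f :: "real \<Rightarrow> real" and a b :: real
  assumes "integrable lborel f" "a \<le> b"
  shows "(LBINT x=a..b. f x) = integral {a..b} f" "f integrable_on {a..b}"
proof -
  have si: "set_integrable lborel {a..b} f" using set_int_of_int[OF assms(1)] by auto
  show "(LBINT x=a..b. f x) = integral {a..b} f"
    by (rule interval_integral_eq_integral[OF assms(2) si])
  show "f integrable_on {a..b}" by (rule set_borel_integral_eq_integral(1)[OF si])
qed

lemma iv_cont:
  fixes f :: "real \<Rightarrow> real" and a x0 :: real
  assumes f: "integrable lborel f"
  shows "isCont (\<lambda>x::real. LBINT y=a..x. f y) x0"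
proof -
  define p where "p = min a x0 - 1"
  define q where "q = max a x0 + 1"
  have eq: "(LBINT y=a..x. f y) = integral {p..x} f - integral {p..a} f" if "x \<in> {p..q}" for x
  proof -
    have "(LBINT y=p..a. f y) + (LBINT y=a..x. f y) = (LBINT y=p..x. f y)" by (rule iv_sum[OF f])
    moreover have "(LBINT y=p..a. f y) = integral {p..a} f" using iv_henstock[OF f, of p a] p_def by auto
    moreover have "(LBINT y=p..x. f y) = integral {p..x} f" using iv_henstock[OF f, of p x] that by auto
    ultimately show ?thesis by simp
  qed
  have "continuous_on {p..q} (\<lambda>x. integral {p..x} f - integral {p..a} f)"
    by (intro continuous_intros indefinite_integral_continuous_1 iv_henstock(2)[OF f]) (simp add: p_def q_def)
  hence "continuous_on {p..q} (\<lambda>x. LBINT y=a..x. f y)"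
    by (rule continuous_on_eq) (simp add: eq)
  moreover have "x0 \<in> interior {p..q}" by (simp add: p_def q_def min_def max_def)
  ultimately show ?thesis by (rule continuous_on_interior)
qed

lemma iv_nonneg:
  fixes f :: "real \<Rightarrow> real" and a b :: real
  assumes f: "integrable lborel f" and nn: "\<And>x. f x \<ge> 0" and ab: "a \<le> b"
  shows "(LBINT x=a..b. f x) \<ge> 0"
  using iv_henstock[OF f ab] nn by (simp add: integral_nonneg)

lemma iv_mono:
  fixes f :: "real \<Rightarrow> real" and a b :: real
  fixes c :: real
  assumes f: "integrable lborel f" and nn: "\<And>x. f x \<ge> 0" and ab: "a \<le> b"
  shows "(LBINT y=c..a. f y) \<le> (LBINT y=c..b. f y)"
  using iv_sum[OF f, of c a b] iv_nonneg[OF f nn ab] by linarith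



lemma sup_level:
  fixes G :: "real \<Rightarrow> real"
  assumes cont: "\<And>x. isCont G x" and lo: "G l < v" and hi: "\<And>x. x \<ge> h \<Longrightarrow> G x \<ge> v"
  shows "G (Sup {x. G x < v}) = v"
proof -
  define S where "S = {x. G x < v}"
  have ne: "S \<noteq> {}" using lo by (auto simp: S_def)
  have ub: "x \<le> h" if "x \<in> S" for x using hi[of x] that by (force simp: S_def)
  hence bdd: "bdd_above S" by (auto simp: bdd_above_def)
  define s where "s = Sup S"
  have up: "x \<le> s" if "x \<in> S" for x using cSup_upper[OF that bdd] s_def by simp
  have "\<not> G s > v"
  proof
    assume gt: "G s > v"
    obtain d where d: "d > 0" "\<And>y. dist y s < d \<Longrightarrow> dist (G y) (G s) < G s - v"
      using cont[of s] gt unfolding continuous_at_eps_delta by (metis diff_gt_0_iff_gt)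
    have "x \<le> s - d" if "x \<in> S" for x
    proof (rule ccontr)
      assume "\<not> x \<le> s - d"
      moreover have "x \<le> s" using up that .
      ultimately have "dist x s < d" by (simp add: dist_real_def)
      hence "dist (G x) (G s) < G s - v" by (rule d(2))
      hence "G x > v" by (simp add: dist_real_def)
      thus False using that by (simp add: S_def)
    qed
    hence "s \<le> s - d" unfolding s_def by (intro cSup_least ne) (simp add: s_def)
    thus False using d by simp
  qed
  moreover have "\<not> G s < v"
  proof
    assume lt: "G s < v"
    obtain d where d: "d > 0" "\<And>y. dist y s < d \<Longrightarrow> dist (G y) (G s) < v - G s"
      using cont[of s] lt unfolding continuous_at_eps_delta by (metis diff_gt_0_iff_gt)
    have "dist (s + d/2) s < d" using d by (simp add: dist_real_def)
    hence "dist (G (s + d/2)) (G s) < v - G s" by (rule d(2))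
    hence "s + d/2 \<in> S" by (simp add: S_def dist_real_def)
    hence "s + d/2 \<le> s" by (rule up)
    thus False using d by simp
  qed
  ultimately show ?thesis by (simp add: s_def S_def)
qed



lemma torus_int_eq:
  fixes f :: "real \<Rightarrow> real" and L x :: real
  assumes L: "L > 0" and x: "x \<ge> L/2"
  shows "(LBINT y=(-L/2)..x. indicator (torus_dom L) y * f y) = (LINT y:torus_dom L|lborel. f y)"
proof -
  have "(LBINT y=(-L/2)..x. indicator (torus_dom L) y * f y)
      = (LINT y:{-L/2..x}|lborel. indicator (torus_dom L) y * f y)"
    using L x by (intro interval_integral_Icc) simp
  also have "\<dots> = (LINT y:torus_dom L|lborel. f y)"
    unfolding set_lebesgue_integral_def
    by (rule Bochner_Integration.integral_cong[OF refl])
       (use L x in \<open>auto simp: torus_dom_def indicator_def\<close>)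
  finally show ?thesis .
qed

lemma init_G:
  fixes \<rho>0 :: "real \<Rightarrow> real" and L :: real and N :: nat
  assumes L: "L > 0" and nn: "\<forall>y\<in>torus_dom L. \<rho>0 y \<ge> 0"
    and si: "set_integrable lborel (torus_dom L) \<rho>0"
    and cpos: "cmass L \<rho>0 > 0" and N: "N \<ge> 1" and k: "k \<le> N"
  shows "(LBINT y=(-L/2)..(init_pos L \<rho>0 N k). indicator (torus_dom L) y * \<rho>0 y)
           = real k * cmass L \<rho>0 / real N"
  using k
proof (induction k)
  case 0
  then show ?case by simp
next
  case (Suc k)
  define rt where "rt = (\<lambda>y. indicator (torus_dom L) y * \<rho>0 y)"
  define G where "G = (\<lambda>x::real. LBINT y=(-L/2)..x. rt y)"
  define c where "c = cmass L \<rho>0"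
  have rt_int: "integrable lborel rt" using si unfolding set_integrable_def rt_def by simp
  have G_cont: "isCont G x" for x unfolding G_def by (rule iv_cont[OF rt_int])
  have G_hi: "G x = c" if "x \<ge> L/2" for x
    unfolding G_def rt_def c_def cmass_def using torus_int_eq[OF L that] .
  have IH: "G (init_pos L \<rho>0 N k) = real k * c / real N"
    using Suc unfolding G_def rt_def c_def by simp
  have diff: "(LBINT y=a..x. rt y) = G x - G a" for a x :: real
    using iv_sum[OF rt_int, of "-L/2" a x] unfolding G_def by simp
  have seteq: "{x. (LBINT y=init_pos L \<rho>0 N k..x. indicator (torus_dom L) y * \<rho>0 y) < cmass L \<rho>0 / real N}
     = {x. G x < real (Suc k) * c / real N}"
  proof -
    have eqx: "(LBINT y=init_pos L \<rho>0 N k..x. indicator (torus_dom L) y * \<rho>0 y) = G x - real k * c / real N" for x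
      using diff[of "init_pos L \<rho>0 N k" x] IH by (simp add: rt_def)
    have sp: "real (Suc k) * c / real N = real k * c / real N + c / real N"
      by (simp add: add_divide_distrib distrib_right)
    show ?thesis
    proof (rule Collect_cong)
      fix x
      show "((LBINT y=init_pos L \<rho>0 N k..x. indicator (torus_dom L) y * \<rho>0 y) < cmass L \<rho>0 / real N) \<longleftrightarrow> G x < real (Suc k) * c / real N"
        unfolding eqx sp c_def[symmetric] by linarith
    qed
  qed
  have vpos: "real (Suc k) * c / real N > 0" using cpos N by (simp add: c_def)
  have vle: "real (Suc k) * c / real N \<le> c"
  proof -
    have "real (Suc k) * c \<le> real N * c" using Suc.prems cpos by (intro mult_right_mono) (auto simp: c_def)
    thus ?thesis using N by (simp add: divide_le_eq mult.commute)
  qed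
  have "G (Sup {x. G x < real (Suc k) * c / real N}) = real (Suc k) * c / real N"
  proof (rule sup_level[OF G_cont, of "-L/2" _ "L/2"])
    show "G (- L / 2) < real (Suc k) * c / real N" using vpos by (simp add: G_def)
    show "real (Suc k) * c / real N \<le> G x" if "L / 2 \<le> x" for x using G_hi[OF that] vle by simp
  qed
  then show ?case using seteq by (simp add: G_def rt_def c_def)
qed



lemma gap_jensen:
  fixes W W' \<rho>0 :: "real \<Rightarrow> real" and a b \<mu> L :: real
  assumes W_deriv: "\<forall>r\<ge>0. (W has_real_derivative W' r) (at r within {0..})"
    and phi_0: "phi W W' 0 = 0" and mono: "strict_mono_on {0..} (phi W W')"
    and Wnn: "\<forall>r\<ge>0. W r \<ge> 0"
    and nn: "\<forall>y\<in>torus_dom L. \<rho>0 y \<ge> 0"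
    and rt_int: "integrable lborel (\<lambda>y. indicator (torus_dom L) y * \<rho>0 y)"
    and g_int: "integrable lborel (\<lambda>y. indicator (torus_dom L) y * W (\<rho>0 y))"
    and ab: "a < b" and mu: "\<mu> > 0"
    and mass: "(LBINT y=a..b. indicator (torus_dom L) y * \<rho>0 y) = \<mu>"
  shows "(b - a) * W (\<mu> / (b - a)) \<le> (LBINT y=a..b. indicator (torus_dom L) y * W (\<rho>0 y))"
proof -
  define rt where "rt = (\<lambda>y. indicator (torus_dom L) y * \<rho>0 y)"
  define g where "g = (\<lambda>y. indicator (torus_dom L) y * W (\<rho>0 y))"
  define m where "m = \<mu> / (b - a)"
  have mpos: "m > 0" using ab mu by (simp add: m_def)
  have phim: "phi W W' m > 0"
    using mono mpos phi_0 unfolding strict_mono_on_def by (metis atLeast_iff order_refl less_imp_le)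
  have pw: "W m - W' m * m + W' m * rt y \<le> g y" for y
  proof (cases "y \<in> torus_dom L")
    case True
    have "W (\<rho>0 y) \<ge> W m + W' m * (\<rho>0 y - m)"
      by (rule supp_line[OF W_deriv phi_0 mono Wnn mpos]) (use nn True in auto)
    then show ?thesis using True by (simp add: rt_def g_def algebra_simps)
  next
    case False
    then show ?thesis using phim by (simp add: rt_def g_def phi_def algebra_simps)
  qed
  have abl: "a \<le> b" using ab by simp
  have rt_i: "rt integrable_on {a..b}" using iv_henstock(2)[OF rt_int abl] by (simp add: rt_def)
  have g_i: "g integrable_on {a..b}" using iv_henstock(2)[OF g_int abl] by (simp add: g_def)
  have mass': "integral {a..b} rt = \<mu>" using iv_henstock(1)[OF rt_int abl] mass by (simp add: rt_def)
  have l_i: "(\<lambda>y. (W m - W' m * m) + W' m * rt y) integrable_on {a..b}"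
    by (intro integrable_add integrable_const[of _ a b, simplified] integrable_on_cmult_left[of rt _ "W' m", simplified] rt_i)
  have "integral {a..b} (\<lambda>y. (W m - W' m * m) + W' m * rt y) \<le> integral {a..b} g"
    by (rule integral_le[OF l_i g_i]) (use pw in auto)
  moreover have "integral {a..b} (\<lambda>y. (W m - W' m * m) + W' m * rt y) = (b - a) * (W m - W' m * m) + W' m * \<mu>"
    using integral_add[OF integrable_const[of "W m - W' m * m" a b, simplified] integrable_on_cmult_left[OF rt_i, of "W' m", simplified]]
      mass' abl by simp
  moreover have "(b - a) * (W m - W' m * m) + W' m * \<mu> = (b - a) * W m"
    using ab by (simp add: m_def field_simps)
  moreover have "integral {a..b} g = (LBINT y=a..b. indicator (torus_dom L) y * W (\<rho>0 y))"
    using iv_henstock(1)[OF g_int abl] by (simp add: g_def)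
  ultimately show ?thesis by (simp add: m_def)
qed



lemma init_energy:
  fixes W W' \<rho>0 :: "real \<Rightarrow> real" and L :: real and N :: nat and y :: "nat \<Rightarrow> real"
  assumes W_deriv: "\<forall>r\<ge>0. (W has_real_derivative W' r) (at r within {0..})"
    and phi_0: "phi W W' 0 = 0" and mono: "strict_mono_on {0..} (phi W W')"
    and Wnn: "\<forall>r\<ge>0. W r \<ge> 0"
    and L: "L > 0"
    and nn: "\<forall>y\<in>torus_dom L. \<rho>0 y \<ge> 0"
    and si: "set_integrable lborel (torus_dom L) \<rho>0"
    and sw: "set_integrable lborel (torus_dom L) (\<lambda>y. W (\<rho>0 y))"
    and cpos: "cmass L \<rho>0 > 0" and N: "N \<ge> 1"
    and init: "\<forall>k<N. y k = init_pos L \<rho>0 N k"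
    and ord: "\<forall>k. Suc k < N \<longrightarrow> y k < y (Suc k)"
    and last: "y (N - 1) < y 0 + L"
  shows "(\<Sum>k<N. (nxt L N y k - y k) * W (prho L (cmass L \<rho>0) N y k))
           \<le> (LINT x:torus_dom L|lborel. W (\<rho>0 x))"
proof -
  define c where "c = cmass L \<rho>0"
  define rt where "rt = (\<lambda>y. indicator (torus_dom L) y * \<rho>0 y)"
  define g where "g = (\<lambda>y. indicator (torus_dom L) y * W (\<rho>0 y))"
  define G where "G = (\<lambda>x::real. LBINT y=(-L/2)..x. rt y)"
  define H where "H = (\<lambda>x::real. LBINT y=(-L/2)..x. g y)"
  define X where "X = (\<lambda>k. if k < N then y k else L/2)"
  have rt_int: "integrable lborel rt" using si unfolding set_integrable_def rt_def by simp
  have g_int: "integrable lborel g" using sw unfolding set_integrable_def g_def by simp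
  have y0: "y 0 = - L / 2" using init N by auto
  have nxtX: "nxt L N y k = X (Suc k)" if "k < N" for k
    using that y0 by (auto simp: nxt_def X_def)
  have GX: "G (X k) = real k * c / real N" if "k \<le> N" for k
  proof (cases "k < N")
    case True
    then show ?thesis using init_G[OF L nn si cpos N, of k] init
      by (simp add: X_def G_def rt_def c_def)
  next
    case False
    hence "k = N" using that by simp
    then show ?thesis using torus_int_eq[OF L, of "L/2" \<rho>0] N
      by (simp add: X_def G_def rt_def c_def cmass_def)
  qed
  have Xlt: "X k < X (Suc k)" if "k < N" for k
  proof (cases "Suc k < N")
    case True then show ?thesis using ord by (simp add: X_def)
  next
    case False
    hence "k = N - 1" using that by simp
    then show ?thesis using last y0 that False by (simp add: X_def)
  qed
  have termb: "(nxt L N y k - y k) * W (prho L c N y k) \<le> H (X (Suc k)) - H (X k)" if k: "k < N" for k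
  proof -
    have yk: "y k = X k" using k by (simp add: X_def)
    have mass: "(LBINT y=X k..X (Suc k). rt y) = c / real N"
    proof -
      have "(LBINT y=X k..X (Suc k). rt y) = G (X (Suc k)) - G (X k)"
        using iv_sum[OF rt_int, of "-L/2" "X k" "X (Suc k)"] by (simp add: G_def)
      also have "\<dots> = c / real N" using GX[of k] GX[of "Suc k"] k
        by (simp add: diff_divide_distrib[symmetric] algebra_simps)
      finally show ?thesis .
    qed
    have cN: "c / real N > 0" using cpos N by (simp add: c_def)
    have "(X (Suc k) - X k) * W ((c / real N) / (X (Suc k) - X k)) \<le> (LBINT y=X k..X (Suc k). g y)"
      using gap_jensen[OF W_deriv phi_0 mono Wnn nn, of "X k" "X (Suc k)" "c / real N"]
        rt_int g_int Xlt[OF k] cN mass by (simp add: rt_def g_def)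
    moreover have "(LBINT y=X k..X (Suc k). g y) = H (X (Suc k)) - H (X k)"
      using iv_sum[OF g_int, of "-L/2" "X k" "X (Suc k)"] by (simp add: H_def)
    moreover have "prho L c N y k = (c / real N) / (X (Suc k) - X k)"
      by (simp add: prho_def nxtX[OF k] yk)
    ultimately show ?thesis by (simp add: nxtX[OF k] yk)
  qed
  have "(\<Sum>k<N. (nxt L N y k - y k) * W (prho L c N y k)) \<le> (\<Sum>k<N. H (X (Suc k)) - H (X k))"
    by (rule sum_mono) (use termb in auto)
  also have "\<dots> = H (X N) - H (X 0)" by (rule sum_lessThan_telescope)
  also have "\<dots> = (LINT x:torus_dom L|lborel. W (\<rho>0 x))"
    using torus_int_eq[OF L, of "L/2" "\<lambda>x. W (\<rho>0 x)"] N y0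
    by (simp add: H_def X_def g_def)
  finally show ?thesis by (simp add: c_def)
qed



lemma abs_int_bound:
  fixes f g :: "real \<Rightarrow> real"
  assumes g: "integrable lborel g" and b: "\<And>x. \<bar>f x\<bar> \<le> g x"
  shows "\<bar>integral\<^sup>L lborel f\<bar> \<le> integral\<^sup>L lborel g"
proof (cases "integrable lborel f")
  case True
  then show ?thesis using integral_abs_bound_integral[OF True g] b by simp
next
  case False
  hence "integral\<^sup>L lborel f = 0" by (rule not_integrable_integral_eq)
  moreover have "integral\<^sup>L lborel g \<ge> 0"
    by (rule integral_nonneg_AE) (use b in \<open>auto intro: order_trans[OF abs_ge_zero]\<close>)
  ultimately show ?thesis by simp
qed

lemma FL_W_bound:
  fixes K W \<rho>0 :: "real \<Rightarrow> real" and L M C0 :: real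
  assumes Kb: "\<forall>z. \<bar>K z\<bar> \<le> M"
    and nn: "\<forall>y\<in>torus_dom L. \<rho>0 y \<ge> 0"
    and si: "set_integrable lborel (torus_dom L) \<rho>0"
    and c0: "cmass L \<rho>0 \<ge> 0" and c1: "cmass L \<rho>0 \<le> 1"
    and FL: "FL K W L \<rho>0 \<le> C0"
  shows "(LINT x:torus_dom L|lborel. W (\<rho>0 x)) \<le> C0 + M / 2"
proof -
  define c where "c = cmass L \<rho>0"
  define rt where "rt = (\<lambda>y. indicator (torus_dom L) y * \<rho>0 y)"
  have rt_int: "integrable lborel rt" using si unfolding set_integrable_def rt_def by simp
  have rt_nn: "rt y \<ge> 0" for y using nn by (simp add: rt_def indicator_def)
  have crt: "integral\<^sup>L lborel rt = c" by (simp add: c_def cmass_def set_lebesgue_integral_def rt_def)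
  have M0: "M \<ge> 0" using Kb by (metis abs_ge_zero order_trans)
  define h where "h = (\<lambda>x. LINT y:torus_dom L|lborel. K (tred L (x - y)) * \<rho>0 x * \<rho>0 y)"
  have hb: "\<bar>indicator (torus_dom L) x * h x\<bar> \<le> M * c * rt x" for x
  proof (cases "x \<in> torus_dom L")
    case True
    have "\<bar>h x\<bar> \<le> integral\<^sup>L lborel (\<lambda>y. (M * \<rho>0 x) * rt y)"
      unfolding h_def set_lebesgue_integral_def
    proof (rule abs_int_bound)
      show "integrable lborel (\<lambda>y. M * \<rho>0 x * rt y)" using rt_int by simp
      fix y
      have "\<bar>K (tred L (x - y))\<bar> * (\<rho>0 x * rt y) \<le> M * (\<rho>0 x * rt y)"
        using Kb nn True rt_nn by (intro mult_right_mono) auto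
      then show "\<bar>indicator (torus_dom L) y *\<^sub>R (K (tred L (x - y)) * \<rho>0 x * \<rho>0 y)\<bar> \<le> M * \<rho>0 x * rt y"
        using nn True by (auto simp: rt_def indicator_def abs_mult)
    qed
    also have "\<dots> = M * \<rho>0 x * c" using crt by simp
    finally show ?thesis using True by (simp add: rt_def mult_ac)
  next
    case False
    then show ?thesis by (simp add: rt_def)
  qed
  have Db: "\<bar>LINT x:torus_dom L|lborel. h x\<bar> \<le> M * c * c"
  proof -
    have "\<bar>LINT x:torus_dom L|lborel. h x\<bar> \<le> integral\<^sup>L lborel (\<lambda>x. M * c * rt x)"
      unfolding set_lebesgue_integral_def
      by (rule abs_int_bound) (use rt_int hb in auto)
    also have "\<dots> = M * c * c" using crt by simp
    finally show ?thesis .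
  qed
  have "M * c * c \<le> M" using M0 c0 c1 unfolding c_def
    by (metis mult_left_le mult_le_one mult.assoc mult_nonneg_nonneg)
  hence "(LINT x:torus_dom L|lborel. h x) \<ge> - M" using Db by linarith
  moreover have "FL K W L \<rho>0 = 1/2 * (LINT x:torus_dom L|lborel. h x) + (LINT x:torus_dom L|lborel. W (\<rho>0 x))"
    by (simp add: FL_def h_def)
  ultimately show ?thesis using FL by linarith
qed



lemma term_deriv:
  fixes W W' g :: "real \<Rightarrow> real"
  assumes W_deriv: "\<forall>r\<ge>0. (W has_real_derivative W' r) (at r within {0..})"
    and gd: "(g has_real_derivative D) (at s)" and gpos: "g s > 0" and a: "a > 0"
  shows "((\<lambda>s. g s * W (a / g s)) has_real_derivative (- D * phi W W' (a / g s))) (at s)"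
proof -
  have Wat: "(W has_real_derivative W' r) (at r)" if "r > 0" for r
  proof -
    have "at r within {0..} = at r"
      by (rule at_within_interior) (use that in auto)
    moreover have "(W has_real_derivative W' r) (at r within {0..})" using W_deriv that by simp
    ultimately show ?thesis by simp
  qed
  have r: "a / g s > 0" using a gpos by simp
  have id: "(\<lambda>s. a / g s) = (\<lambda>s. a * inverse (g s))" by (simp add: divide_inverse)
  have d1: "((\<lambda>s. a / g s) has_real_derivative (a * (- (inverse (g s) * D * inverse (g s))))) (at s)"
  proof -
    have "((\<lambda>s. inverse (g s)) has_real_derivative (- (inverse (g s) * D * inverse (g s)))) (at s)"
      using DERIV_inverse_fun[OF gd] gpos by (simp add: mult_ac)
    then show ?thesis unfolding id by (rule DERIV_cmult)
  qed
  have d2: "((\<lambda>s. W (a / g s)) has_real_derivative W' (a / g s) * (a * (- (inverse (g s) * D * inverse (g s))))) (at s)"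
    by (rule DERIV_chain2[OF Wat[OF r] d1])
  have d3: "((\<lambda>s. g s * W (a / g s)) has_real_derivative
      (g s * (W' (a / g s) * (a * (- (inverse (g s) * D * inverse (g s))))) + D * W (a / g s))) (at s)"
    by (rule DERIV_mult'[OF gd d2, THEN DERIV_cong]) (simp add: algebra_simps)
  moreover have "g s * (W' (a / g s) * (a * (- (inverse (g s) * D * inverse (g s))))) + D * W (a / g s)
      = - D * phi W W' (a / g s)"
    using gpos by (simp add: phi_def field_simps)
  ultimately show ?thesis by simp
qed

lemma cyc_sum:
  fixes f F :: "nat \<Rightarrow> real" and N :: nat
  assumes N: "N \<ge> 1"
  shows "(\<Sum>k<N. f (if Suc k < N then Suc k else 0) * F k) = (\<Sum>k<N. f k * F (if k = 0 then N - 1 else k - 1))"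
proof -
  define \<sigma> where "\<sigma> k = (if Suc k < N then Suc k else 0)" for k
  define p where "p k = (if k = 0 then N - 1 else k - 1)" for k :: nat
  have bij: "bij_betw \<sigma> {..<N} {..<N}"
    by (rule bij_betw_byWitness[where f'=p]) (use N in \<open>auto simp: \<sigma>_def p_def\<close>)
  have "(\<Sum>k<N. f k * F (p k)) = (\<Sum>k<N. f (\<sigma> k) * F (p (\<sigma> k)))"
    by (rule sum.reindex_bij_betw[OF bij, symmetric])
  also have "\<dots> = (\<Sum>k<N. f (\<sigma> k) * F k)"
  proof (rule sum.cong[OF refl])
    fix k assume k: "k \<in> {..<N}"
    show "f (\<sigma> k) * F (p (\<sigma> k)) = f (\<sigma> k) * F k"
    proof (cases "Suc k < N")
      case True then show ?thesis by (simp add: \<sigma>_def p_def)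
    next
      case False
      hence "k = N - 1" using k by simp
      then show ?thesis using False by (simp add: \<sigma>_def p_def)
    qed
  qed
  finally show ?thesis by (simp add: \<sigma>_def p_def)
qed

lemma amgm_step:
  fixes a b c n :: real
  assumes "c > 0" "n > 0"
  shows "(- a - (n / c) * b) * b \<le> (c / (2 * n)) * a^2 - (n / (2 * c)) * b^2"
proof -
  have "0 \<le> (c / (2 * n)) * (a + (n / c) * b)^2" using assms by simp
  also have "(c / (2 * n)) * (a + (n / c) * b)^2 = ((c / (2 * n)) * a^2 - (n / (2 * c)) * b^2) - (- a - (n / c) * b) * b"
    using assms by (simp add: power2_eq_square field_simps)
  finally show ?thesis by linarith
qed



lemma dyn_bound:
  fixes K' W W' \<phi>' :: "real \<Rightarrow> real" and x :: "nat \<Rightarrow> real \<Rightarrow> real"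
    and L c T t M1 :: real and N :: nat
  assumes W_deriv: "\<forall>r\<ge>0. (W has_real_derivative W' r) (at r within {0..})"
    and phi_deriv: "\<forall>r\<ge>0. (phi W W' has_real_derivative \<phi>' r) (at r within {0..})"
    and Wnn: "\<forall>r\<ge>0. W r \<ge> 0"
    and N: "N \<ge> 1" and c: "c > 0" and K'b: "\<forall>z. \<bar>K' z\<bar> \<le> M1"
    and ordr: "\<forall>s\<in>{0..<T}. (\<forall>k. Suc k < N \<longrightarrow> x k s < x (Suc k) s) \<and> x (N - 1) s < x 0 s + L"
    and ode: "\<forall>k<N. \<forall>s\<in>{0..<T}. ((\<lambda>s. x k s) has_real_derivative
            (- (c / real N) * (\<Sum>j\<in>{..<N} - {k}. K' (tred L (x k s - x j s)))
             - (real N / c) * (phi W W' (prho L c N (\<lambda>i. x i s) k) - phi W W' (prho_prev L c N (\<lambda>i. x i s) k))))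
         (at s within {0..<T})"
    and t: "0 \<le> t" "t < T"
  shows "continuous_on {0..t} (\<lambda>s. \<Sum>k<N. real N *
            (phi W W' (prho L c N (\<lambda>i. x i s) k) - phi W W' (prho_prev L c N (\<lambda>i. x i s) k))\<^sup>2)"
    and "integral {0..t} (\<lambda>s. \<Sum>k<N. real N *
            (phi W W' (prho L c N (\<lambda>i. x i s) k) - phi W W' (prho_prev L c N (\<lambda>i. x i s) k))\<^sup>2)
         \<le> 2 * c * (\<Sum>k<N. (nxt L N (\<lambda>i. x i 0) k - x k 0) * W (prho L c N (\<lambda>i. x i 0) k))
            + c^4 * M1^2 * t"
proof -
  define \<phi> where "\<phi> = phi W W'"
  define p where "p k = (if k = 0 then N - 1 else k - 1)" for k
  define \<sigma> where "\<sigma> k = (if Suc k < N then Suc k else 0)" for k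
  define gap where "gap k s = (if Suc k < N then x (Suc k) s else x 0 s + L) - x k s" for k s
  define \<rho> where "\<rho> k s = prho L c N (\<lambda>i. x i s) k" for k s
  define B where "B k s = \<phi> (\<rho> k s) - \<phi> (\<rho> (p k) s)" for k s
  define A where "A k s = (c / real N) * (\<Sum>j\<in>{..<N} - {k}. K' (tred L (x k s - x j s)))" for k s
  define V where "V k s = - A k s - (real N / c) * B k s" for k s
  define Q where "Q s = (\<Sum>k<N. real N * (B k s)\<^sup>2)" for s
  define E where "E s = (\<Sum>k<N. gap k s * W (\<rho> k s))" for s
  have Qeq: "(\<lambda>s. \<Sum>k<N. real N *
            (phi W W' (prho L c N (\<lambda>i. x i s) k) - phi W W' (prho_prev L c N (\<lambda>i. x i s) k))\<^sup>2) = Q"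
    by (simp add: Q_def[abs_def] B_def \<rho>_def \<phi>_def prho_prev_def p_def)
  have Eeq: "(\<Sum>k<N. (nxt L N (\<lambda>i. x i 0) k - x k 0) * W (prho L c N (\<lambda>i. x i 0) k)) = E 0"
    by (simp add: E_def gap_def \<rho>_def nxt_def)
  have \<rho>_eq: "\<rho> k s = (c / real N) / gap k s" for k s
    by (simp add: \<rho>_def prho_def nxt_def gap_def)
  have ode': "((\<lambda>s. x k s) has_real_derivative V k s) (at s within {0..<T})" if "k < N" "s \<in> {0..<T}" for k s
    using ode that by (simp add: V_def A_def B_def \<rho>_def \<phi>_def prho_prev_def p_def)
  have gap_pos: "gap k s > 0" if "k < N" "s \<in> {0..<T}" for k s
  proof (cases "Suc k < N")
    case True then show ?thesis using ordr that by (simp add: gap_def)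
  next
    case False
    hence "k = N - 1" using that by simp
    then show ?thesis using ordr that False by (simp add: gap_def)
  qed
  have \<rho>pos: "\<rho> k s > 0" if "k < N" "s \<in> {0..<T}" for k s
    using gap_pos[OF that] c N by (simp add: \<rho>_eq)
  have pk: "p k < N" if "k < N" for k using that N by (auto simp: p_def)
  have xcont: "continuous_on {0..<T} (\<lambda>s. x k s)" if "k < N" for k
    unfolding continuous_on_eq_continuous_within
    using ode'[OF that] by (blast intro: DERIV_continuous)
  have gapcont: "continuous_on {0..<T} (gap k)" if "k < N" for k
  proof (cases "Suc k < N")
    case True
    then show ?thesis unfolding gap_def using xcont that
      by (simp add: continuous_on_diff)
  next
    case False
    have "continuous_on {0..<T} (\<lambda>s. x 0 s + L - x k s)"
      using xcont[of 0] xcont[OF that] N by (intro continuous_intros) auto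
    then show ?thesis using False unfolding gap_def by simp
  qed
  have \<rho>cont: "continuous_on {0..<T} (\<rho> k)" if "k < N" for k
  proof -
    have "continuous_on {0..<T} (\<lambda>s. (c / real N) / gap k s)"
      using gapcont[OF that] gap_pos[OF that] by (intro continuous_intros) force+
    then show ?thesis by (simp add: \<rho>_eq[abs_def])
  qed
  have \<phi>cont: "continuous_on {0..} \<phi>"
    unfolding continuous_on_eq_continuous_within \<phi>_def
    using phi_deriv by (blast intro: DERIV_continuous)
  have Wcont: "continuous_on {0..} W"
    unfolding continuous_on_eq_continuous_within
    using W_deriv by (blast intro: DERIV_continuous)
  have \<phi>\<rho>cont: "continuous_on {0..<T} (\<lambda>s. \<phi> (\<rho> k s))" if "k < N" for k
    by (rule continuous_on_compose2[OF \<phi>cont \<rho>cont[OF that]]) (use \<rho>pos[OF that] in fastforce)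
  have W\<rho>cont: "continuous_on {0..<T} (\<lambda>s. W (\<rho> k s))" if "k < N" for k
    by (rule continuous_on_compose2[OF Wcont \<rho>cont[OF that]]) (use \<rho>pos[OF that] in fastforce)
  have Qcont: "continuous_on {0..<T} Q"
    unfolding Q_def B_def
    by (intro continuous_intros \<phi>\<rho>cont pk) auto
  have Econt: "continuous_on {0..<T} E"
    unfolding E_def
    by (intro continuous_intros gapcont W\<rho>cont) auto
  have sub: "{0..t} \<subseteq> {0..<T}" using t by auto
  have Qcont_t: "continuous_on {0..t} Q" using continuous_on_subset[OF Qcont sub] .
  show "continuous_on {0..t} (\<lambda>s. \<Sum>k<N. real N *
            (phi W W' (prho L c N (\<lambda>i. x i s) k) - phi W W' (prho_prev L c N (\<lambda>i. x i s) k))\<^sup>2)"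
    unfolding Qeq by (rule Qcont_t)
  have M1: "M1 \<ge> 0" using K'b by (metis abs_ge_zero order_trans)
  have Ederiv: "\<exists>D. (E has_real_derivative D) (at s) \<and> 2 * c * D \<le> c^4 * M1^2 - Q s"
    if s: "0 < s" "s < T" for s
  proof -
    have sT: "s \<in> {0..<T}" using s by simp
    have atw: "at s within {0..<T} = at s"
      by (rule at_within_interior) (use s in simp)
    have xd: "((\<lambda>s. x k s) has_real_derivative V k s) (at s)" if "k < N" for k
      using ode'[OF that sT] atw by simp
    have gapd: "((\<lambda>s. gap k s) has_real_derivative (V (\<sigma> k) s - V k s)) (at s)" if k: "k < N" for k
    proof (cases "Suc k < N")
      case True
      then show ?thesis unfolding gap_def \<sigma>_def using xd[OF True] xd[OF k]
        by (simp add: DERIV_diff)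
    next
      case False
      have "((\<lambda>s. x 0 s + L - x k s) has_real_derivative (V 0 s + 0 - V k s)) (at s)"
        using xd[of 0] xd[OF k] N by (intro DERIV_diff DERIV_add DERIV_const) auto
      then show ?thesis using False unfolding gap_def \<sigma>_def by simp
    qed
    have cN: "c / real N > 0" using c N by simp
    have termd: "((\<lambda>s. gap k s * W (\<rho> k s)) has_real_derivative
                 (- (V (\<sigma> k) s - V k s) * \<phi> (\<rho> k s))) (at s)" if k: "k < N" for k
      using term_deriv[OF W_deriv gapd[OF k] gap_pos[OF k sT] cN]
      by (simp add: \<rho>_eq \<phi>_def)
    define D where "D = (\<Sum>k<N. - (V (\<sigma> k) s - V k s) * \<phi> (\<rho> k s))"
    have Ed: "(E has_real_derivative D) (at s)"
      unfolding E_def[abs_def] D_def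
      by (rule DERIV_sum) (use termd in auto)
    have D_eq: "D = (\<Sum>k<N. V k s * B k s)"
    proof -
      have "D = (\<Sum>k<N. V k s * \<phi> (\<rho> k s)) - (\<Sum>k<N. V (\<sigma> k) s * \<phi> (\<rho> k s))"
        by (simp add: D_def sum_subtractf[symmetric] algebra_simps)
      also have "(\<Sum>k<N. V (\<sigma> k) s * \<phi> (\<rho> k s)) = (\<Sum>k<N. V k s * \<phi> (\<rho> (p k) s))"
        using cyc_sum[OF N, of "\<lambda>k. V k s" "\<lambda>k. \<phi> (\<rho> k s)"] by (simp add: \<sigma>_def p_def)
      finally show ?thesis by (simp add: B_def sum_subtractf[symmetric] algebra_simps)
    qed
    have Ab: "(A k s)\<^sup>2 \<le> c\<^sup>2 * M1\<^sup>2" if k: "k < N" for k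
    proof -
      have "\<bar>\<Sum>j\<in>{..<N} - {k}. K' (tred L (x k s - x j s))\<bar> \<le> (\<Sum>j\<in>{..<N} - {k}. \<bar>K' (tred L (x k s - x j s))\<bar>)"
        by (rule sum_abs)
      also have "\<dots> \<le> (\<Sum>j\<in>{..<N} - {k}. M1)" by (rule sum_mono) (use K'b in auto)
      also have "\<dots> = real (card ({..<N} - {k})) * M1" by simp
      also have "\<dots> \<le> real N * M1"
      proof -
        have "card ({..<N} - {k}) \<le> N" using card_Diff1_le[of "{..<N}" k] by simp
        then show ?thesis using M1 by (intro mult_right_mono) auto
      qed
      finally have sb: "\<bar>\<Sum>j\<in>{..<N} - {k}. K' (tred L (x k s - x j s))\<bar> \<le> real N * M1" .
      have "\<bar>A k s\<bar> = (c / real N) * \<bar>\<Sum>j\<in>{..<N} - {k}. K' (tred L (x k s - x j s))\<bar>"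
        using c by (simp add: A_def abs_mult)
      also have "\<dots> \<le> (c / real N) * (real N * M1)" using sb c by (intro mult_left_mono) auto
      also have "\<dots> = c * M1" using N by simp
      finally have "\<bar>A k s\<bar> \<le> c * M1" .
      hence "\<bar>A k s\<bar>\<^sup>2 \<le> (c * M1)\<^sup>2" by (intro power_mono) auto
      thus ?thesis by (simp add: power_mult_distrib)
    qed
    have "D \<le> (\<Sum>k<N. (c / (2 * real N)) * (A k s)\<^sup>2 - (real N / (2 * c)) * (B k s)\<^sup>2)"
      unfolding D_eq V_def
      by (rule sum_mono) (use amgm_step[OF c, of "real N"] N in auto)
    also have "\<dots> \<le> (\<Sum>k<N. (c / (2 * real N)) * (c\<^sup>2 * M1\<^sup>2) - (real N / (2 * c)) * (B k s)\<^sup>2)"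
    proof (rule sum_mono)
      fix k assume "k \<in> {..<N}"
      then have "(c / (2 * real N)) * (A k s)\<^sup>2 \<le> (c / (2 * real N)) * (c\<^sup>2 * M1\<^sup>2)"
        using Ab c by (intro mult_left_mono) auto
      then show "(c / (2 * real N)) * (A k s)\<^sup>2 - (real N / (2 * c)) * (B k s)\<^sup>2
          \<le> (c / (2 * real N)) * (c\<^sup>2 * M1\<^sup>2) - (real N / (2 * c)) * (B k s)\<^sup>2" by linarith
    qed
    also have "\<dots> = c^3 * M1^2 / 2 - Q s / (2 * c)"
      using N c by (simp add: sum_subtractf Q_def sum_divide_distrib[symmetric] sum_distrib_left[symmetric]
          power2_eq_square power3_eq_cube field_simps)
    finally have "D \<le> c^3 * M1^2 / 2 - Q s / (2 * c)" .
    hence "2 * c * D \<le> 2 * c * (c^3 * M1^2 / 2 - Q s / (2 * c))" using c by simp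
    also have "\<dots> = c^4 * M1^2 - Q s" using c by (simp add: field_simps power_def)
    finally show ?thesis using Ed by blast
  qed
  define \<Phi> where "\<Phi> u = 2 * c * E u + integral {0..u} Q - c^4 * M1^2 * u" for u
  have "\<Phi> 0 \<ge> \<Phi> t"
  proof (rule DERIV_nonpos_imp_decreasing_open[OF t(1)])
    fix u assume u: "0 < u" "u < t"
    obtain D where D: "(E has_real_derivative D) (at u)" "2 * c * D \<le> c^4 * M1^2 - Q u"
      using Ederiv[of u] u t by auto
    have Id: "((\<lambda>u. integral {0..u} Q) has_real_derivative Q u) (at u)"
    proof -
      have "((\<lambda>u. integral {0..u} Q) has_real_derivative Q u) (at u within {0..t})"
        by (rule integral_has_real_derivative[OF Qcont_t]) (use u in simp)
      moreover have "at u within {0..t} = at u" by (rule at_within_interior) (use u in simp)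
      ultimately show ?thesis by simp
    qed
    have "(\<Phi> has_real_derivative (2 * c * D + Q u - c^4 * M1^2 * 1)) (at u)"
      unfolding \<Phi>_def[abs_def]
      by (intro DERIV_diff DERIV_add DERIV_cmult D(1) Id DERIV_ident)
    then show "\<exists>y. (\<Phi> has_real_derivative y) (at u) \<and> y \<le> 0" using D(2) by force
  next
    have "continuous_on {0..t} E" using continuous_on_subset[OF Econt sub] .
    moreover have "continuous_on {0..t} (\<lambda>u. integral {0..u} Q)"
      by (rule indefinite_integral_continuous_1) (rule integrable_continuous_real[OF Qcont_t])
    ultimately show "continuous_on {0..t} \<Phi>"
      unfolding \<Phi>_def[abs_def] by (intro continuous_intros) auto
  qed
  moreover have "E t \<ge> 0"
    unfolding E_def
  proof (rule sum_nonneg)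
    fix k assume k: "k \<in> {..<N}"
    have "gap k t > 0" "\<rho> k t > 0" using gap_pos[of k t] \<rho>pos[of k t] k t by auto
    then show "gap k t * W (\<rho> k t) \<ge> 0" using Wnn by simp
  qed
  ultimately have "integral {0..t} Q \<le> 2 * c * E 0 + c^4 * M1^2 * t"
    using c by (simp add: \<Phi>_def) (smt (verit) mult_nonneg_nonneg)
  then show "integral {0..t} (\<lambda>s. \<Sum>k<N. real N *
            (phi W W' (prho L c N (\<lambda>i. x i s) k) - phi W W' (prho_prev L c N (\<lambda>i. x i s) k))\<^sup>2)
         \<le> 2 * c * (\<Sum>k<N. (nxt L N (\<lambda>i. x i 0) k - x k 0) * W (prho L c N (\<lambda>i. x i 0) k))
            + c^4 * M1^2 * t"
    unfolding Qeq Eeq .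
qed



lemma nn_bound_from_compact:
  fixes Q :: "real \<Rightarrow> real" and T B :: real
  assumes T: "T > 0" and cont: "\<And>t. 0 \<le> t \<Longrightarrow> t < T \<Longrightarrow> continuous_on {0..t} Q" and nn: "\<And>s. s \<in> {0..<T} \<Longrightarrow> Q s \<ge> 0"
    and bd: "\<And>t. 0 \<le> t \<Longrightarrow> t < T \<Longrightarrow> integral {0..t} Q \<le> B"
  shows "(\<integral>\<^sup>+ s\<in>{0..<T}. ennreal (Q s) \<partial>lborel) \<le> ennreal B"
proof -
  define tn where "tn n = T - T / real (Suc (Suc n))" for n
  have tn0: "0 \<le> tn n" for n using T by (simp add: tn_def field_simps)
  have tnT: "tn n < T" for n using T by (simp add: tn_def)
  have tnmono: "tn n \<le> tn (Suc n)" for n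
    using T by (simp add: tn_def frac_le)
  have tnreach: "\<exists>n. s \<le> tn n" if "s < T" for s
  proof -
    obtain n :: nat where n: "T / (T - s) < real n" using reals_Archimedean2 by blast
    have Ts: "T - s > 0" using that by simp
    have "T < real n * (T - s)" using n Ts by (simp add: divide_less_eq)
    also have "\<dots> \<le> real (Suc (Suc n)) * (T - s)" using Ts by (intro mult_right_mono) auto
    finally have "T / real (Suc (Suc n)) < T - s" by (simp add: divide_less_eq mult.commute)
    hence "s \<le> tn n" by (simp add: tn_def)
    thus ?thesis by blast
  qed
  define f where "f n s = ennreal (Q s) * indicator {0..tn n} s" for n s
  have sub: "{0..tn n} \<subseteq> {0..<T}" for n using tnT[of n] by auto
  have meas: "f n \<in> borel_measurable lborel" for n
  proof -
    have "(\<lambda>s. indicator {0..tn n} s *\<^sub>R Q s) \<in> borel_measurable borel"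
      by (rule borel_measurable_continuous_on_indicator) (use cont[OF tn0 tnT] in auto)
    hence "(\<lambda>s. ennreal (indicator {0..tn n} s *\<^sub>R Q s)) \<in> borel_measurable borel" by measurable
    moreover have "(\<lambda>s. ennreal (indicator {0..tn n} s *\<^sub>R Q s)) = f n"
      by (auto simp: f_def indicator_def fun_eq_iff)
    ultimately show ?thesis by simp
  qed
  have inc: "incseq f"
  proof (rule incseq_SucI, rule le_funI)
    fix n s
    show "f n s \<le> f (Suc n) s"
      using tnmono[of n] by (auto simp: f_def indicator_def)
  qed
  have each: "integral\<^sup>N lborel (f n) \<le> ennreal B" for n
  proof -
    have ci: "continuous_on {0..tn n} Q" using cont[OF tn0 tnT] .
    have hi: "(Q has_integral integral {0..tn n} Q) {0..tn n}"
      using integrable_continuous_real[OF ci] by (rule integrable_integral)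
    have "integral\<^sup>N lborel (\<lambda>x. indicator {0..tn n} x * Q x) = integral {0..tn n} Q"
      by (rule nn_integral_has_integral_lebesgue[OF _ hi]) (use nn sub[of n] in auto)
    moreover have "integral\<^sup>N lborel (f n) = integral\<^sup>N lborel (\<lambda>x. indicator {0..tn n} x * Q x)"
      by (rule nn_integral_cong) (auto simp: f_def indicator_def)
    moreover have "integral {0..tn n} Q \<le> B" by (rule bd[OF tn0 tnT])
    ultimately show ?thesis by (simp add: ennreal_leI)
  qed
  have supeq: "(\<lambda>s. ennreal (Q s) * indicator {0..<T} s) = (\<lambda>s. SUP n. f n s)"
  proof
    fix s
    show "ennreal (Q s) * indicator {0..<T} s = (SUP n. f n s)"
    proof (cases "s \<in> {0..<T}")
      case True
      then obtain n0 where n0: "s \<le> tn n0" using tnreach by auto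
      have "(SUP n. f n s) \<le> ennreal (Q s)"
        by (rule SUP_least) (auto simp: f_def indicator_def)
      moreover have "ennreal (Q s) \<le> (SUP n. f n s)"
        by (rule SUP_upper2[of n0]) (use True n0 in \<open>auto simp: f_def indicator_def\<close>)
      ultimately show ?thesis using True by simp
    next
      case False
      have "f n s = 0" for n using False sub[of n] by (auto simp: f_def indicator_def)
      then show ?thesis using False by simp
    qed
  qed
  have "(\<integral>\<^sup>+ s\<in>{0..<T}. ennreal (Q s) \<partial>lborel) = (\<integral>\<^sup>+ s. (SUP n. f n s) \<partial>lborel)"
    by (simp add: supeq)
  also have "\<dots> = (SUP n. integral\<^sup>N lborel (f n))"
    by (rule nn_integral_monotone_convergence_SUP[OF inc meas])
  also have "\<dots> \<le> ennreal B" by (rule SUP_least) (rule each)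
  finally show ?thesis .
qed


theorem lemma4p2:
  fixes K K' K'' W W' \<phi>' :: "real \<Rightarrow> real"
    and c0 c1 c2 \<rho>hat \<rho>bar :: real
  assumes K_even: "\<forall>z. K z = K \<bar>z\<bar>"
    and K_cont: "continuous_on UNIV K"
    and K_deriv: "\<forall>z. z \<noteq> 0 \<longrightarrow> (K has_real_derivative K' z) (at z)"
    and K'_deriv: "\<forall>z. z \<noteq> 0 \<longrightarrow> (K' has_real_derivative K'' z) (at z)"
    and K''_cont: "continuous_on (- {0}) K''"
    and K_bdd: "\<exists>M. \<forall>z. \<bar>K z\<bar> \<le> M"
    and K'_bdd: "\<exists>M. \<forall>z. z \<noteq> 0 \<longrightarrow> \<bar>K' z\<bar> \<le> M"
    and K''_bdd: "\<exists>M. \<forall>z. z \<noteq> 0 \<longrightarrow> \<bar>K'' z\<bar> \<le> M"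
    and K'_L1: "integrable lborel K'"
    and W_nonneg: "\<forall>r\<ge>0. W r \<ge> 0"
    and W_deriv: "\<forall>r\<ge>0. (W has_real_derivative W' r) (at r within {0..})"
    and phi_deriv: "\<forall>r\<ge>0. (phi W W' has_real_derivative \<phi>' r) (at r within {0..})"
    and phi'_cont: "continuous_on {0..} \<phi>'"
    and phi_0: "phi W W' 0 = 0"
    and phi_mono: "strict_mono_on {0..} (phi W W')"
    and c0_pos: "c0 > 0"
    and phi_c0: "\<forall>r\<ge>0. \<phi>' r * r \<le> c0 * phi W W' r"
    and phi_max: "\<forall>r\<ge>0. phi W W' r \<le> max r (c0 * W r)"
    and c1_pos: "c1 > 0" and c2_pos: "c2 > 0"
    and rho_hat: "\<rho>hat < 1" and rho_bar: "1 < \<rho>bar"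
    and phi_small: "\<forall>r. 0 \<le> r \<and> r \<le> \<rho>hat \<longrightarrow> phi W W' r \<le> c1 * r"
    and phi_large: "\<forall>r. r \<ge> \<rho>bar \<longrightarrow> phi W W' r \<ge> c2 * r"
  shows "\<forall>C0>0. \<exists>C. \<forall>T>0. \<forall>L>0. \<exists>Nbar::nat.
           \<forall>(\<rho>0::real \<Rightarrow> real) (x::nat \<Rightarrow> nat \<Rightarrow> real \<Rightarrow> real).
             (\<forall>y\<in>torus_dom L. \<rho>0 y \<ge> 0) \<and>
             set_integrable lborel (torus_dom L) \<rho>0 \<and>
             cmass L \<rho>0 \<le> 1 \<and>
             set_integrable lborel (torus_dom L) (\<lambda>y. W (\<rho>0 y)) \<and>
             FL K W L \<rho>0 \<le> C0 \<and>
             (\<forall>N\<ge>Nbar. particle_solution K' (phi W W') L \<rho>0 N T (x N))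
             \<longrightarrow>
             (\<forall>N\<ge>Nbar.
                (\<integral>\<^sup>+ t\<in>{0..<T}.
                   ennreal (\<Sum>k<N. real N *
                     (phi W W' (prho L (cmass L \<rho>0) N (\<lambda>i. x N i t) k)
                      - phi W W' (prho_prev L (cmass L \<rho>0) N (\<lambda>i. x N i t) k))\<^sup>2) \<partial>lborel)
                \<le> ennreal (C * (1 + T)))"
  proof (intro allI impI)
  fix C0 :: real assume C0: "C0 > 0"
  obtain M where M: "\<forall>z. \<bar>K z\<bar> \<le> M" using K_bdd by auto
  obtain M1' where M1': "\<forall>z. z \<noteq> 0 \<longrightarrow> \<bar>K' z\<bar> \<le> M1'" using K'_bdd by auto
  define M1 where "M1 = max M1' \<bar>K' 0\<bar>"
  have K'b: "\<forall>z. \<bar>K' z\<bar> \<le> M1"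
  proof
    fix z show "\<bar>K' z\<bar> \<le> M1" using M1' by (cases "z = 0") (auto simp: M1_def)
  qed
  have M0: "M \<ge> 0" using M by (metis abs_ge_zero order_trans)
  define C where "C = 2 * C0 + M + M1^2"
  have main: "(\<integral>\<^sup>+ t\<in>{0..<T}.
                   ennreal (\<Sum>k<N. real N *
                     (phi W W' (prho L (cmass L \<rho>0) N (\<lambda>i. x N i t) k)
                      - phi W W' (prho_prev L (cmass L \<rho>0) N (\<lambda>i. x N i t) k))\<^sup>2) \<partial>lborel)
                \<le> ennreal (C * (1 + T))"
    if T: "T > 0" and L: "L > 0" and nn: "\<forall>y\<in>torus_dom L. \<rho>0 y \<ge> 0"
      and si: "set_integrable lborel (torus_dom L) \<rho>0"
      and c1: "cmass L \<rho>0 \<le> 1"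
      and sw: "set_integrable lborel (torus_dom L) (\<lambda>y. W (\<rho>0 y))"
      and FLb: "FL K W L \<rho>0 \<le> C0"
      and sol: "particle_solution K' (phi W W') L \<rho>0 N T (x N)"
      and N: "N \<ge> 1"
    for T L \<rho>0 x N
  proof -
    define c where "c = cmass L \<rho>0"
    have c0: "c \<ge> 0"
      unfolding c_def cmass_def set_lebesgue_integral_def
      by (rule integral_nonneg_AE) (use nn in \<open>auto simp: indicator_def\<close>)
    show ?thesis
    proof (cases "c = 0")
      case True
      have "prho L (cmass L \<rho>0) N y k = 0" for y k using True by (simp add: c_def prho_def)
      hence "(\<integral>\<^sup>+ t\<in>{0..<T}.
                   ennreal (\<Sum>k<N. real N *
                     (phi W W' (prho L (cmass L \<rho>0) N (\<lambda>i. x N i t) k)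
                      - phi W W' (prho_prev L (cmass L \<rho>0) N (\<lambda>i. x N i t) k))\<^sup>2) \<partial>lborel) = 0"
        by (simp add: prho_prev_def)
      then show ?thesis by simp
    next
      case False
      hence cpos: "c > 0" using c0 by simp
      have init0: "\<forall>k<N. x N k 0 = init_pos L \<rho>0 N k"
        and ordr: "\<forall>s\<in>{0..<T}. (\<forall>k. Suc k < N \<longrightarrow> x N k s < x N (Suc k) s) \<and> x N (N - 1) s < x N 0 s + L"
        and ode: "\<forall>k<N. \<forall>s\<in>{0..<T}. ((\<lambda>s. x N k s) has_real_derivative
            (- (c / real N) * (\<Sum>j\<in>{..<N} - {k}. K' (tred L (x N k s - x N j s)))
             - (real N / c) * (phi W W' (prho L c N (\<lambda>i. x N i s) k) - phi W W' (prho_prev L c N (\<lambda>i. x N i s) k))))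
         (at s within {0..<T})"
        using sol unfolding particle_solution_def Let_def c_def by auto
      have ord0: "(\<forall>k. Suc k < N \<longrightarrow> x N k 0 < x N (Suc k) 0) \<and> x N (N - 1) 0 < x N 0 0 + L"
        using ordr T by auto
      define E0 where "E0 = (\<Sum>k<N. (nxt L N (\<lambda>i. x N i 0) k - x N k 0) * W (prho L c N (\<lambda>i. x N i 0) k))"
      have E0b: "E0 \<le> (LINT x:torus_dom L|lborel. W (\<rho>0 x))"
        unfolding E0_def c_def
        by (rule init_energy[OF W_deriv phi_0 phi_mono W_nonneg L nn si sw _ N, of "\<lambda>k. x N k 0"])
           (use cpos init0 ord0 in \<open>auto simp: c_def\<close>)
      have IWb: "(LINT x:torus_dom L|lborel. W (\<rho>0 x)) \<le> C0 + M / 2"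
        by (rule FL_W_bound[OF M nn si _ c1 FLb]) (use c0 in \<open>simp add: c_def\<close>)
      have c1': "c \<le> 1" using c1 by (simp add: c_def)
      have c4: "c^4 \<le> 1" using c0 c1' by (simp add: power_le_one)
      have bnd: "integral {0..t} (\<lambda>s. \<Sum>k<N. real N *
            (phi W W' (prho L c N (\<lambda>i. x N i s) k) - phi W W' (prho_prev L c N (\<lambda>i. x N i s) k))\<^sup>2)
            \<le> C * (1 + T)" if t: "0 \<le> t" "t < T" for t
      proof -
        have "integral {0..t} (\<lambda>s. \<Sum>k<N. real N *
            (phi W W' (prho L c N (\<lambda>i. x N i s) k) - phi W W' (prho_prev L c N (\<lambda>i. x N i s) k))\<^sup>2)
            \<le> 2 * c * E0 + c^4 * M1^2 * t"
          unfolding E0_def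
          by (rule dyn_bound(2)[OF W_deriv phi_deriv W_nonneg N cpos K'b ordr ode t])
        also have "2 * c * E0 \<le> 2 * C0 + M"
        proof -
          have "E0 \<le> C0 + M / 2" using E0b IWb by linarith
          hence "2 * c * E0 \<le> 2 * c * (C0 + M / 2)" using c0 by (intro mult_left_mono) auto
          also have "\<dots> \<le> 2 * 1 * (C0 + M / 2)" using c1' C0 M0 by (intro mult_right_mono mult_left_mono) auto
          finally show ?thesis by simp
        qed
        hence "2 * c * E0 + c^4 * M1^2 * t \<le> 2 * C0 + M + M1^2 * T"
        proof -
          have "c^4 * M1^2 * t \<le> 1 * M1^2 * T"
            using c4 t c0 by (intro mult_mono) auto
          thus ?thesis using \<open>2 * c * E0 \<le> 2 * C0 + M\<close> by simp
        qed
        also have "\<dots> \<le> C * (1 + T)"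
        proof -
          have "C * (1 + T) = C + C * T" by (simp add: algebra_simps)
          moreover have "M1^2 * T \<le> C * T" using T C0 M0 by (intro mult_right_mono) (auto simp: C_def)
          moreover have "2 * C0 + M \<le> C" by (simp add: C_def)
          ultimately show ?thesis by linarith
        qed
        finally show ?thesis by simp
      qed
      show ?thesis
        unfolding c_def[symmetric]
      proof (rule nn_bound_from_compact[OF T])
        show "continuous_on {0..t} (\<lambda>s. \<Sum>k<N. real N *
            (phi W W' (prho L c N (\<lambda>i. x N i s) k) - phi W W' (prho_prev L c N (\<lambda>i. x N i s) k))\<^sup>2)"
          if "0 \<le> t" "t < T" for t
          by (rule dyn_bound(1)[OF W_deriv phi_deriv W_nonneg N cpos K'b ordr ode that])
        show "0 \<le> (\<Sum>k<N. real N *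
            (phi W W' (prho L c N (\<lambda>i. x N i s) k) - phi W W' (prho_prev L c N (\<lambda>i. x N i s) k))\<^sup>2)" for s
          by (intro sum_nonneg) auto
        show "integral {0..t} (\<lambda>s. \<Sum>k<N. real N *
            (phi W W' (prho L c N (\<lambda>i. x N i s) k) - phi W W' (prho_prev L c N (\<lambda>i. x N i s) k))\<^sup>2)
            \<le> C * (1 + T)" if "0 \<le> t" "t < T" for t
          using bnd[OF that] .
      qed
    qed
  qed
  show "\<exists>C. \<forall>T>0. \<forall>L>0. \<exists>Nbar::nat.
           \<forall>(\<rho>0::real \<Rightarrow> real) (x::nat \<Rightarrow> nat \<Rightarrow> real \<Rightarrow> real).
             (\<forall>y\<in>torus_dom L. \<rho>0 y \<ge> 0) \<and>
             set_integrable lborel (torus_dom L) \<rho>0 \<and>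
             cmass L \<rho>0 \<le> 1 \<and>
             set_integrable lborel (torus_dom L) (\<lambda>y. W (\<rho>0 y)) \<and>
             FL K W L \<rho>0 \<le> C0 \<and>
             (\<forall>N\<ge>Nbar. particle_solution K' (phi W W') L \<rho>0 N T (x N))
             \<longrightarrow>
             (\<forall>N\<ge>Nbar.
                (\<integral>\<^sup>+ t\<in>{0..<T}.
                   ennreal (\<Sum>k<N. real N *
                     (phi W W' (prho L (cmass L \<rho>0) N (\<lambda>i. x N i t) k)
                      - phi W W' (prho_prev L (cmass L \<rho>0) N (\<lambda>i. x N i t) k))\<^sup>2) \<partial>lborel)
                \<le> ennreal (C * (1 + T)))"
  proof (rule exI[of _ C], intro allI impI)
    fix T L :: real assume T: "T > 0" and L: "L > 0"
    show "\<exists>Nbar::nat.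
           \<forall>(\<rho>0::real \<Rightarrow> real) (x::nat \<Rightarrow> nat \<Rightarrow> real \<Rightarrow> real).
             (\<forall>y\<in>torus_dom L. \<rho>0 y \<ge> 0) \<and>
             set_integrable lborel (torus_dom L) \<rho>0 \<and>
             cmass L \<rho>0 \<le> 1 \<and>
             set_integrable lborel (torus_dom L) (\<lambda>y. W (\<rho>0 y)) \<and>
             FL K W L \<rho>0 \<le> C0 \<and>
             (\<forall>N\<ge>Nbar. particle_solution K' (phi W W') L \<rho>0 N T (x N))
             \<longrightarrow>
             (\<forall>N\<ge>Nbar.
                (\<integral>\<^sup>+ t\<in>{0..<T}.
                   ennreal (\<Sum>k<N. real N *
                     (phi W W' (prho L (cmass L \<rho>0) N (\<lambda>i. x N i t) k)
                      - phi W W' (prho_prev L (cmass L \<rho>0) N (\<lambda>i. x N i t) k))\<^sup>2) \<partial>lborel)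
                \<le> ennreal (C * (1 + T)))"
      using main[OF T L] by (intro exI[of _ 1]) blast
  qed
qed

end
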